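(* Let $\mathcal{H},\mathcal{K}$ be Hilbert spaces, let $(\omega_k)_{k\ge0}$ be a sequence of strictly positive weights, set $\beta(0)=1$ and $\beta(n)=\omega_0\cdots\omega_{n-1}$ for $n\ge1$, and suppose $$\sup_{n,k\ge0}\frac{\beta(n+k)}{\beta(n)}<\infty.$$ Let $S_\omega\in\mathcal{B}(\ell^2(\mathcal{H}))$ be the unilateral weighted shift $S_\omega(x_0,x_1,\ldots)=(0,\omega_0x_0,\omega_1x_1,\ldots)$. Let $T\in\mathcal{B}(\mathcal{K})$ be similar to a contraction and let $X\in\mathcal{B}(\ell^2(\mathcal{H}),\mathcal{K})$. Put $$R(X)=\begin{bmatrix}T & X\\ 0 & S_\omega\end{bmatrix},\qquad R(0)=T\oplus S_\omega\qquad\text{in }\mathcal{B}(\mathcal{K}\oplus\ell^2(\mathcal{H})).$$ Suppose there is a constant $s$ such that for every $N\in\mathbb{N}$ and all $x_0,\ldots,x_N\in\mathcal{H}_0$, $$\Big\|\sum_{n=0}^{N}\frac{1}{\beta(n)}\big(R(X)^n-R(0)^n\big)x_n\Big\|\le s\Big(\sum_{n=0}^N\|x_n\|^2\Big)^{1/2},$$ where $\mathcal{H}_0=\{0\}\oplus(\mathcal{H}\oplus\{0\}\oplus\{0\}\oplus\cdots)\subset\mathcal{K}\oplus\ell^2(\mathcal{H})$ (i.e. $R(X)$ is $\beta$-quadratically near $R(0)$ modulo $\mathcal{H}$). Then $R(X)$ is similar to a contraction.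
   Context: Two operators $A,C$ on a Hilbert space $\mathcal{E}$ are $\beta$-quadratically near modulo a subspace $\mathcal{E}_0$ if there is $s$ with $\|\sum_{n=0}^N\beta(n)^{-1}(A^n-C^n)x_n\|\le s(\sum_{n=0}^N\|x_n\|^2)^{1/2}$ for all $N$ and all $x_0,\ldots,x_N\in\mathcal{E}_0$. An operator is similar to a contraction if it is conjugate by an invertible operator to an operator of norm at most 1. *)

theory Defs
  imports "HOL-Analysis.Analysis"
begin

text \<open>A complex Hilbert space is
  the same thing as a real Hilbert space (real inner product = real part of the
  complex one, same norm) together with a complex scalar multiplication extending
  the real one, for which multiplication by the imaginary unit is orthogonal.\<close>

class complex_hilbert = real_inner + complete_space +
  fixes scaleC :: "complex \<Rightarrow> 'a \<Rightarrow> 'a"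
  assumes scaleC_add_right: "scaleC c (x + y) = scaleC c x + scaleC c y"
    and scaleC_add_left: "scaleC (c + d) x = scaleC c x + scaleC d x"
    and scaleC_scaleC: "scaleC c (scaleC d x) = scaleC (c * d) x"
    and scaleC_one: "scaleC 1 x = x"
    and scaleR_scaleC: "scaleR r x = scaleC (complex_of_real r) x"
    and inner_scaleC_ii: "inner (scaleC \<i> x) (scaleC \<i> y) = inner x y"

record 'a cspace =
  sp_carrier :: "'a set"
  sp_add :: "'a \<Rightarrow> 'a \<Rightarrow> 'a"
  sp_scale :: "complex \<Rightarrow> 'a \<Rightarrow> 'a"
  sp_norm :: "'a \<Rightarrow> real"

definition bop :: "'a cspace \<Rightarrow> 'b cspace \<Rightarrow> ('a \<Rightarrow> 'b) \<Rightarrow> bool" where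
  "bop V W A \<longleftrightarrow>
     (\<forall>v\<in>sp_carrier V. A v \<in> sp_carrier W) \<and>
     (\<forall>v\<in>sp_carrier V. \<forall>w\<in>sp_carrier V. A (sp_add V v w) = sp_add W (A v) (A w)) \<and>
     (\<forall>c. \<forall>v\<in>sp_carrier V. A (sp_scale V c v) = sp_scale W c (A v)) \<and>
     (\<exists>C. \<forall>v\<in>sp_carrier V. sp_norm W (A v) \<le> C * sp_norm V v)"

definition similar_to_contraction :: "'a cspace \<Rightarrow> ('a \<Rightarrow> 'a) \<Rightarrow> bool" where
  "similar_to_contraction V A \<longleftrightarrow>
     (\<exists>L Li. bop V V L \<and> bop V V Li \<and>
        (\<forall>v\<in>sp_carrier V. Li (L v) = v \<and> L (Li v) = v) \<and>
        (\<forall>v\<in>sp_carrier V. sp_norm V (L (A (Li v))) \<le> sp_norm V v))"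

definition hspace :: "'a::complex_hilbert cspace" where
  "hspace = \<lparr>sp_carrier = UNIV, sp_add = (+), sp_scale = scaleC, sp_norm = norm\<rparr>"

definition ell2_set :: "(nat \<Rightarrow> 'a::complex_hilbert) set" where
  "ell2_set = {x. summable (\<lambda>n. (norm (x n))\<^sup>2)}"

definition ell2_norm :: "(nat \<Rightarrow> 'a::complex_hilbert) \<Rightarrow> real" where
  "ell2_norm x = sqrt (\<Sum>n. (norm (x n))\<^sup>2)"

definition ell2 :: "(nat \<Rightarrow> 'a::complex_hilbert) cspace" where
  "ell2 = \<lparr>sp_carrier = ell2_set, sp_add = (\<lambda>x y n. x n + y n),
           sp_scale = (\<lambda>c x n. scaleC c (x n)), sp_norm = ell2_norm\<rparr>"

definition dsum_space :: "('k::complex_hilbert \<times> (nat \<Rightarrow> 'h::complex_hilbert)) cspace" where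
  "dsum_space = \<lparr>sp_carrier = UNIV \<times> ell2_set,
      sp_add = (\<lambda>(a, x) (b, y). (a + b, \<lambda>n. x n + y n)),
      sp_scale = (\<lambda>c (a, x). (scaleC c a, \<lambda>n. scaleC c (x n))),
      sp_norm = (\<lambda>(a, x). sqrt ((norm a)\<^sup>2 + (ell2_norm x)\<^sup>2))\<rparr>"

definition wbeta :: "(nat \<Rightarrow> real) \<Rightarrow> nat \<Rightarrow> real" where
  "wbeta \<omega> n = (\<Prod>k<n. \<omega> k)"

definition wshift :: "(nat \<Rightarrow> real) \<Rightarrow> (nat \<Rightarrow> 'a::complex_hilbert) \<Rightarrow> nat \<Rightarrow> 'a" where
  "wshift \<omega> x n = (if n = 0 then 0 else scaleR (\<omega> (n - 1)) (x (n - 1)))"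

definition Rop :: "('k::complex_hilbert \<Rightarrow> 'k) \<Rightarrow> ((nat \<Rightarrow> 'h::complex_hilbert) \<Rightarrow> 'k)
     \<Rightarrow> (nat \<Rightarrow> real) \<Rightarrow> 'k \<times> (nat \<Rightarrow> 'h) \<Rightarrow> 'k \<times> (nat \<Rightarrow> 'h)" where
  "Rop T X \<omega> = (\<lambda>(a, x). (T a + X x, wshift \<omega> x))"

definition emb0 :: "'h::complex_hilbert \<Rightarrow> 'k::complex_hilbert \<times> (nat \<Rightarrow> 'h)" where
  "emb0 h = (0, \<lambda>n. if n = 0 then h else 0)"

definition dsum_sum :: "nat set \<Rightarrow> (nat \<Rightarrow> 'k::complex_hilbert \<times> (nat \<Rightarrow> 'h::complex_hilbert))
     \<Rightarrow> 'k \<times> (nat \<Rightarrow> 'h)" where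
  "dsum_sum I v = ((\<Sum>n\<in>I. fst (v n)), (\<lambda>m. \<Sum>n\<in>I. snd (v n) m))"

definition beta_quad_near_mod_H ::
  "(nat \<Rightarrow> real) \<Rightarrow> ('k::complex_hilbert \<times> (nat \<Rightarrow> 'h::complex_hilbert) \<Rightarrow> 'k \<times> (nat \<Rightarrow> 'h))
     \<Rightarrow> ('k \<times> (nat \<Rightarrow> 'h) \<Rightarrow> 'k \<times> (nat \<Rightarrow> 'h)) \<Rightarrow> bool" where
  "beta_quad_near_mod_H \<beta> A C \<longleftrightarrow>
     (\<exists>s. \<forall>N. \<forall>xs :: nat \<Rightarrow> 'h.
        sp_norm dsum_space
          (dsum_sum {..N} (\<lambda>n. sp_scale dsum_space (complex_of_real (1 / \<beta> n))
              (sp_add dsum_space ((A ^^ n) (emb0 (xs n)))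
                  (sp_scale dsum_space (-1) ((C ^^ n) (emb0 (xs n)))))))
        \<le> s * sqrt (\<Sum>n\<le>N. (norm (xs n))\<^sup>2))"

end

theory Submission
  imports Defs
begin


subclass (in complex_hilbert) banach ..

lemma scaleC_of_real: "scaleC (complex_of_real r) x = r *\<^sub>R (x::'a::complex_hilbert)"
  by (simp add: scaleR_scaleC)

lemma scaleC_zero_left[simp]: "scaleC 0 x = (0::'a::complex_hilbert)"
  using scaleC_of_real[of 0 x] by simp

lemma scaleC_minus1: "scaleC (-1) x = - (x::'a::complex_hilbert)"
  using scaleC_of_real[of "-1" x] by simp

lemma scaleC_scaleR_comm: "scaleC c (r *\<^sub>R x) = r *\<^sub>R scaleC c (x::'a::complex_hilbert)"
  by (simp add: scaleR_scaleC scaleC_scaleC mult.commute)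

lemma scaleC_zero_right[simp]: "scaleC c 0 = (0::'a::complex_hilbert)"
  using scaleC_add_right[of c 0 0] by simp

lemma scaleC_minus_right: "scaleC c (- x) = - scaleC c (x::'a::complex_hilbert)"
proof -
  have "scaleC c x + scaleC c (- x) = 0" using scaleC_add_right[of c x "-x"] by simp
  then show ?thesis by (metis minus_unique)
qed

lemma scaleC_diff_right: "scaleC c (x - y) = scaleC c x - scaleC c (y::'a::complex_hilbert)"
  using scaleC_add_right[of c x "-y"] by (simp add: scaleC_minus_right)

lemma norm_scaleC_ii: "norm (scaleC \<i> x) = norm (x::'a::complex_hilbert)"
  by (simp add: norm_eq_sqrt_inner inner_scaleC_ii)

lemma scaleC_decomp: "scaleC c x = Re c *\<^sub>R x + Im c *\<^sub>R scaleC \<i> (x::'a::complex_hilbert)"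
proof -
  have "c = complex_of_real (Re c) + \<i> * complex_of_real (Im c)"
    by (simp add: complex_eq_iff)
  then have "scaleC c x = scaleC (complex_of_real (Re c) + \<i> * complex_of_real (Im c)) x" by simp
  also have "\<dots> = Re c *\<^sub>R x + Im c *\<^sub>R scaleC \<i> x"
    by (simp add: scaleC_add_left scaleC_scaleC[symmetric] scaleC_of_real scaleC_scaleR_comm)
  finally show ?thesis .
qed

lemma norm_scaleC_le: "norm (scaleC c x) \<le> (\<bar>Re c\<bar> + \<bar>Im c\<bar>) * norm (x::'a::complex_hilbert)"
proof -
  have "norm (scaleC c x) \<le> norm (Re c *\<^sub>R x) + norm (Im c *\<^sub>R scaleC \<i> x)"
    unfolding scaleC_decomp[of c x] by (rule norm_triangle_ineq)
  also have "\<dots> = (\<bar>Re c\<bar> + \<bar>Im c\<bar>) * norm x" by (simp add: norm_scaleC_ii algebra_simps)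
  finally show ?thesis .
qed

lemma bounded_linear_scaleC: "bounded_linear (scaleC c :: 'a::complex_hilbert \<Rightarrow> 'a)"
  apply (rule bounded_linear_intro[where K="\<bar>Re c\<bar> + \<bar>Im c\<bar>"])
    apply (simp add: scaleC_add_right)
   apply (simp add: scaleC_scaleR_comm)
  using norm_scaleC_le by (simp add: mult.commute)

lemma bop_hspace:
  assumes "bop hspace hspace (A :: 'a::complex_hilbert \<Rightarrow> 'b::complex_hilbert)"
  shows "bounded_linear A" and "A (scaleC c v) = scaleC c (A v)" and "A (u + v) = A u + A v"
proof -
  from assms have add: "\<And>u v. A (u + v) = A u + A v" and sc: "\<And>c v. A (scaleC c v) = scaleC c (A v)"
    and bd: "\<exists>C. \<forall>v. norm (A v) \<le> C * norm v"
    by (auto simp: bop_def hspace_def)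
  show "A (scaleC c v) = scaleC c (A v)" "A (u + v) = A u + A v" using add sc by auto
  from bd obtain C where C: "\<And>v. norm (A v) \<le> C * norm v" by blast
  show "bounded_linear A"
  proof (rule bounded_linear_intro[where K=C])
    show "A (x + y) = A x + A y" for x y by (rule add)
    show "A (r *\<^sub>R x) = r *\<^sub>R A x" for r x
      using sc[of "complex_of_real r" x] by (simp only: scaleC_of_real)
    show "norm (A x) \<le> norm x * C" for x using C[of x] by (simp add: mult.commute)
  qed
qed

lemma ell2_bound:
  assumes x: "x \<in> ell2_set" and b: "\<And>n. norm (y n) \<le> K * norm (x n)"
  shows "y \<in> ell2_set" and "ell2_norm y \<le> \<bar>K\<bar> * ell2_norm x"
proof -
  have le: "(norm (y n))\<^sup>2 \<le> K\<^sup>2 * (norm (x n))\<^sup>2" for n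
  proof -
    have "K * norm (x n) \<le> \<bar>K\<bar> * norm (x n)" by (rule mult_right_mono) auto
    then have "norm (y n) \<le> \<bar>K\<bar> * norm (x n)" using b[of n] by linarith
    then have "(norm (y n))\<^sup>2 \<le> (\<bar>K\<bar> * norm (x n))\<^sup>2" by (simp add: power_mono)
    then show ?thesis by (simp add: power_mult_distrib)
  qed
  have sx: "summable (\<lambda>n. (norm (x n))\<^sup>2)" using x by (simp add: ell2_set_def)
  then have sk: "summable (\<lambda>n. K\<^sup>2 * (norm (x n))\<^sup>2)" by (rule summable_mult)
  have sy: "summable (\<lambda>n. (norm (y n))\<^sup>2)"
  proof (rule summable_comparison_test'[OF sk, where N=0])
    fix n :: nat
    have "norm ((norm (y n))\<^sup>2) = (norm (y n))\<^sup>2" by simp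
    then show "norm ((norm (y n))\<^sup>2) \<le> K\<^sup>2 * (norm (x n))\<^sup>2" using le[of n] by linarith
  qed
  then show "y \<in> ell2_set" by (simp add: ell2_set_def)
  have "(\<Sum>n. (norm (y n))\<^sup>2) \<le> (\<Sum>n. K\<^sup>2 * (norm (x n))\<^sup>2)"
    by (rule suminf_le[OF le sy sk])
  also have "\<dots> = K\<^sup>2 * (\<Sum>n. (norm (x n))\<^sup>2)" by (rule suminf_mult[OF sx])
  finally have "sqrt (\<Sum>n. (norm (y n))\<^sup>2) \<le> sqrt (K\<^sup>2 * (\<Sum>n. (norm (x n))\<^sup>2))"
    by (rule real_sqrt_le_mono)
  moreover have "sqrt (K\<^sup>2 * (\<Sum>n. (norm (x n))\<^sup>2)) = \<bar>K\<bar> * sqrt (\<Sum>n. (norm (x n))\<^sup>2)"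
    by (simp only: real_sqrt_mult real_sqrt_abs)
  ultimately show "ell2_norm y \<le> \<bar>K\<bar> * ell2_norm x" unfolding ell2_norm_def by (rule ord_le_eq_trans)
qed

lemma ell2_add:
  assumes x: "x \<in> ell2_set" and y: "y \<in> ell2_set"
  shows "(\<lambda>n. x n + y n) \<in> ell2_set"
proof -
  have sx: "summable (\<lambda>n. (norm (x n))\<^sup>2)" "summable (\<lambda>n. (norm (y n))\<^sup>2)"
    using x y by (auto simp: ell2_set_def)
  have s2: "summable (\<lambda>n. 2 * (norm (x n))\<^sup>2 + 2 * (norm (y n))\<^sup>2)"
    using sx by (intro summable_add summable_mult)
  have le: "norm ((norm (x n + y n))\<^sup>2) \<le> 2 * (norm (x n))\<^sup>2 + 2 * (norm (y n))\<^sup>2" for n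
  proof -
    have "norm (x n + y n) \<le> norm (x n) + norm (y n)" by (rule norm_triangle_ineq)
    then have "(norm (x n + y n))\<^sup>2 \<le> (norm (x n) + norm (y n))\<^sup>2" by (simp add: power_mono)
    also have "\<dots> \<le> 2 * (norm (x n))\<^sup>2 + 2 * (norm (y n))\<^sup>2"
      using power2_sum[of "norm (x n)" "norm (y n)"] power2_diff[of "norm (x n)" "norm (y n)"]
        zero_le_power2[of "norm (x n) - norm (y n)"] by linarith
    finally show ?thesis by simp
  qed
  show ?thesis unfolding ell2_set_def
    by (simp, rule summable_comparison_test'[OF s2, where N=0]) (rule le)
qed

lemma ell2_scaleR: "x \<in> ell2_set \<Longrightarrow> (\<lambda>n. r *\<^sub>R x n) \<in> ell2_set"
  by (rule ell2_bound[where K="\<bar>r\<bar>"]) auto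

lemma ell2_scaleC: "x \<in> ell2_set \<Longrightarrow> (\<lambda>n. scaleC c (x n)) \<in> ell2_set"
  by (rule ell2_bound[where K="\<bar>Re c\<bar> + \<bar>Im c\<bar>"]) (auto intro: norm_scaleC_le)

lemma ell2_minus: "x \<in> ell2_set \<Longrightarrow> y \<in> ell2_set \<Longrightarrow> (\<lambda>n. x n - y n) \<in> ell2_set"
  using ell2_add[of x "\<lambda>n. (-1) *\<^sub>R y n"] ell2_scaleR[of y "-1"] by simp

lemma ell2_zero: "(\<lambda>n. 0) \<in> ell2_set"
  by (simp add: ell2_set_def)

lemma ell2_norm_zero[simp]: "ell2_norm (\<lambda>n. 0) = 0"
  by (simp add: ell2_norm_def)

lemma ell2_norm_nonneg: "x \<in> ell2_set \<Longrightarrow> ell2_norm x \<ge> 0"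
  by (simp add: ell2_norm_def ell2_set_def suminf_nonneg)



definition en :: "nat \<Rightarrow> 'h::complex_hilbert \<Rightarrow> nat \<Rightarrow> 'h" where
  "en n h = (\<lambda>m. if m = n then h else 0)"

primrec Dn :: "('k::complex_hilbert \<Rightarrow> 'k) \<Rightarrow> ((nat \<Rightarrow> 'h::complex_hilbert) \<Rightarrow> 'k)
   \<Rightarrow> (nat \<Rightarrow> real) \<Rightarrow> nat \<Rightarrow> 'h \<Rightarrow> 'k" where
  "Dn T X \<omega> 0 h = 0"
| "Dn T X \<omega> (Suc n) h = T (Dn T X \<omega> n h) + X (en n (wbeta \<omega> n *\<^sub>R h))"

lemma wbeta_0[simp]: "wbeta \<omega> 0 = 1" by (simp add: wbeta_def)
lemma wbeta_Suc: "wbeta \<omega> (Suc n) = wbeta \<omega> n * \<omega> n" by (simp add: wbeta_def)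

lemma wshift_en: "wshift \<omega> (en n (b *\<^sub>R h)) = en (Suc n) ((b * \<omega> n) *\<^sub>R h)"
  by (rule ext) (auto simp: wshift_def en_def)

lemma R_pow: "(Rop T X \<omega> ^^ n) (emb0 h) = (Dn T X \<omega> n h, en n (wbeta \<omega> n *\<^sub>R h))"
proof (induction n)
  case 0
  show ?case by (simp add: emb0_def en_def)
next
  case (Suc n)
  have "(Rop T X \<omega> ^^ Suc n) (emb0 h) = Rop T X \<omega> ((Rop T X \<omega> ^^ n) (emb0 h))" by simp
  also have "\<dots> = Rop T X \<omega> (Dn T X \<omega> n h, en n (wbeta \<omega> n *\<^sub>R h))" by (simp only: Suc)
  also have "\<dots> = (Dn T X \<omega> (Suc n) h, en (Suc n) (wbeta \<omega> (Suc n) *\<^sub>R h))"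
    by (simp add: Rop_def wshift_en wbeta_Suc)
  finally show ?case .
qed

lemma en_ell2: "en n h \<in> ell2_set"
  unfolding ell2_set_def en_def by (simp, rule summable_finite[of "{n}"]) auto

lemma en_zero[simp]: "en n 0 = (\<lambda>m. 0)"
  by (simp add: en_def)



lemma en_add: "en n (a + b) = (\<lambda>m. en n a m + en n b m)" by (auto simp: en_def)
lemma en_scaleC: "en n (scaleC c a) = (\<lambda>m. scaleC c (en n a m))" by (auto simp: en_def)
lemma en_scaleR: "en n (r *\<^sub>R a) = (\<lambda>m. r *\<^sub>R en n a m)" by (auto simp: en_def)

lemma trunc_ell2: "(\<lambda>k. if k < N then x k else 0) \<in> ell2_set"
  unfolding ell2_set_def by (simp, rule summable_finite[of "{..<N}"]) auto

locale ctx =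
  fixes T :: "'k::complex_hilbert \<Rightarrow> 'k" and X :: "(nat \<Rightarrow> 'h::complex_hilbert) \<Rightarrow> 'k"
    and \<omega> :: "nat \<Rightarrow> real" and M s CX :: real
  assumes pos: "\<And>k. \<omega> k > 0"
    and Mb: "\<And>n k. wbeta \<omega> (n + k) / wbeta \<omega> n \<le> M"
    and T_bop: "bop hspace hspace T"
    and X_add: "\<And>x y. x \<in> ell2_set \<Longrightarrow> y \<in> ell2_set \<Longrightarrow> X (\<lambda>n. x n + y n) = X x + X y"
    and X_sc: "\<And>x c. x \<in> ell2_set \<Longrightarrow> X (\<lambda>n. scaleC c (x n)) = scaleC c (X x)"
    and X_bd: "\<And>x. x \<in> ell2_set \<Longrightarrow> norm (X x) \<le> CX * ell2_norm x"
    and Q: "\<And>N xs. norm (\<Sum>n\<le>N. (1 / wbeta \<omega> n) *\<^sub>R Dn T X \<omega> n (xs n))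
              \<le> s * sqrt (\<Sum>n\<le>N. (norm (xs n))\<^sup>2)"
    and s_nn: "0 \<le> s"
begin

lemma wb_pos: "0 < wbeta \<omega> n"
  unfolding wbeta_def by (rule prod_pos) (use pos in auto)

lemma M_ge1: "1 \<le> M" using Mb[of 0 0] by simp

lemma wb_le: "wbeta \<omega> (n + k) \<le> M * wbeta \<omega> n"
  using Mb[of n k] wb_pos[of n] by (simp add: pos_divide_le_eq)

lemma om_le: "\<omega> n \<le> M"
proof -
  have "wbeta \<omega> n * \<omega> n \<le> wbeta \<omega> n * M" using wb_le[of n 1] by (simp add: wbeta_Suc mult.commute)
  then show ?thesis using wb_pos[of n] by simp
qed

lemma T_lin: "bounded_linear T" by (rule bop_hspace(1)[OF T_bop])
lemma T_sc: "T (scaleC c v) = scaleC c (T v)" by (rule bop_hspace(2)[OF T_bop])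
lemma T_add: "T (u + v) = T u + T v" by (rule bop_hspace(3)[OF T_bop])
lemma T_0: "T 0 = 0" using T_add[of 0 0] by simp
lemma T_scaleR: "T (r *\<^sub>R v) = r *\<^sub>R T v"
  using T_sc[of "complex_of_real r" v] by (simp add: scaleC_of_real)
lemma T_diff: "T (u - v) = T u - T v"
  using T_add[of "u - v" v] by simp

lemma X_0: "X (\<lambda>n. 0) = 0" using X_add[OF ell2_zero ell2_zero] by simp
lemma X_scaleR: "x \<in> ell2_set \<Longrightarrow> X (\<lambda>n. r *\<^sub>R x n) = r *\<^sub>R X x"
  using X_sc[of x "complex_of_real r"] by (simp add: scaleC_of_real)
lemma X_diff:
  assumes x: "x \<in> ell2_set" and y: "y \<in> ell2_set"
  shows "X (\<lambda>n. x n - y n) = X x - X y"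
proof -
  have "X x = X (\<lambda>n. (x n - y n) + y n)" by simp
  also have "\<dots> = X (\<lambda>n. x n - y n) + X y" by (rule X_add[OF ell2_minus[OF x y] y])
  finally show ?thesis by simp
qed

lemma Dn_zero[simp]: "Dn T X \<omega> n 0 = 0"
  by (induction n) (simp_all add: T_0 X_0)

lemma Dn_add: "Dn T X \<omega> n (a + b) = Dn T X \<omega> n a + Dn T X \<omega> n b"
  by (induction n) (simp_all add: T_add scaleR_add_right en_add X_add en_ell2 add_ac)

lemma Dn_sc: "Dn T X \<omega> n (scaleC c a) = scaleC c (Dn T X \<omega> n a)"
  by (induction n) (simp_all add: T_sc scaleC_scaleR_comm[symmetric] en_scaleC X_sc en_ell2 scaleC_add_right)

lemma Dn_scaleR: "Dn T X \<omega> n (r *\<^sub>R a) = r *\<^sub>R Dn T X \<omega> n a"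
  using Dn_sc[of n "complex_of_real r" a] by (simp add: scaleC_of_real)

lemma Dn_Suc': "Dn T X \<omega> (Suc n) h = T (Dn T X \<omega> n h) + wbeta \<omega> n *\<^sub>R X (en n h)"
  by (simp add: en_scaleR X_scaleR en_ell2)

definition fY :: "(nat \<Rightarrow> 'h) \<Rightarrow> nat \<Rightarrow> 'k" where
  "fY x n = (1 / wbeta \<omega> n) *\<^sub>R Dn T X \<omega> n (x n)"

definition Yop :: "(nat \<Rightarrow> 'h) \<Rightarrow> 'k" where
  "Yop x = suminf (fY x)"

lemma Q_sub:
  assumes I: "I \<subseteq> {..N}"
  shows "norm (\<Sum>n\<in>I. fY x n) \<le> s * sqrt (\<Sum>n\<in>I. (norm (x n))\<^sup>2)"
proof -
  define xs where "xs n = (if n \<in> I then x n else 0)" for n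
  have fin: "finite {..N}" by simp
  have e: "{..N} \<inter> I = I" using I by blast
  have "(\<Sum>n\<le>N. (1 / wbeta \<omega> n) *\<^sub>R Dn T X \<omega> n (xs n)) = (\<Sum>n\<in>{..N}. if n \<in> I then fY x n else 0)"
    by (rule sum.cong) (auto simp: xs_def fY_def)
  also have "\<dots> = (\<Sum>n\<in>I. fY x n)" using sum.inter_restrict[OF fin, of "fY x" I] e by simp
  finally have 1: "(\<Sum>n\<le>N. (1 / wbeta \<omega> n) *\<^sub>R Dn T X \<omega> n (xs n)) = (\<Sum>n\<in>I. fY x n)" .
  have "(\<Sum>n\<le>N. (norm (xs n))\<^sup>2) = (\<Sum>n\<in>{..N}. if n \<in> I then (norm (x n))\<^sup>2 else 0)"
    by (rule sum.cong) (auto simp: xs_def)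
  also have "\<dots> = (\<Sum>n\<in>I. (norm (x n))\<^sup>2)"
    using sum.inter_restrict[OF fin, of "\<lambda>n. (norm (x n))\<^sup>2" I] e by simp
  finally have 2: "(\<Sum>n\<le>N. (norm (xs n))\<^sup>2) = (\<Sum>n\<in>I. (norm (x n))\<^sup>2)" .
  show ?thesis using Q[where N=N and xs=xs] unfolding 1 2 .
qed

lemma ell2_summ: "x \<in> ell2_set \<Longrightarrow> summable (\<lambda>n. (norm (x n))\<^sup>2)"
  by (simp add: ell2_set_def)

lemma tail_to_0:
  assumes sa: "summable (a :: nat \<Rightarrow> real)"
  shows "(\<lambda>m. sqrt (suminf a - (\<Sum>i<m. a i))) \<longlonglongrightarrow> 0"
proof -
  have t1: "(\<lambda>m. suminf a - (\<Sum>i<m. a i)) \<longlonglongrightarrow> 0"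
    using tendsto_diff[OF tendsto_const summable_LIMSEQ[OF sa], of "suminf a"] by simp
  show ?thesis using tendsto_real_sqrt[OF t1] by simp
qed

lemma Y_summable:
  assumes x: "x \<in> ell2_set"
  shows "summable (fY x)"
proof -
  define a where "a = (\<lambda>n. (norm (x n))\<^sup>2)"
  have sa: "summable a" using x by (simp add: a_def ell2_set_def)
  have a0: "0 \<le> a n" for n by (simp add: a_def)
  define g where "g m = s * sqrt (suminf a - (\<Sum>i<m. a i))" for m
  have g0: "g \<longlonglongrightarrow> 0" unfolding g_def by (rule tendsto_mult_right_zero[OF tail_to_0[OF sa]])
  have ev: "eventually (\<lambda>m. \<forall>n\<ge>m. norm (sum (fY x) {m..<n}) \<le> g m) sequentially"
  proof (rule always_eventually, intro allI impI)
    fix m n :: nat assume mn: "m \<le> n"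
    have "norm (sum (fY x) {m..<n}) \<le> s * sqrt (\<Sum>i\<in>{m..<n}. a i)"
      unfolding a_def by (rule Q_sub[where N=n]) auto
    also have "\<dots> \<le> g m"
    proof -
      have "(\<Sum>i\<in>{m..<n}. a i) = (\<Sum>i<n. a i) - (\<Sum>i<m. a i)"
        using sum_diff_nat_ivl[of 0 m n a] mn by (simp add: atLeast0LessThan)
      also have "\<dots> \<le> suminf a - (\<Sum>i<m. a i)"
        using sum_le_suminf[OF sa, of "{..<n}"] a0 by simp
      finally show ?thesis unfolding g_def using s_nn by (intro mult_left_mono real_sqrt_le_mono) auto
    qed
    finally show "norm (sum (fY x) {m..<n}) \<le> g m" .
  qed
  show ?thesis by (rule summable_Cauchy'[OF ev g0])
qed

lemma Y_bound:
  assumes x: "x \<in> ell2_set"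
  shows "norm (Yop x) \<le> s * ell2_norm x"
proof -
  have sa: "summable (\<lambda>n. (norm (x n))\<^sup>2)" using x by (simp add: ell2_set_def)
  have lim: "(\<lambda>N. norm (\<Sum>n<N. fY x n)) \<longlonglongrightarrow> norm (Yop x)"
    unfolding Yop_def by (intro tendsto_norm summable_LIMSEQ Y_summable x)
  show ?thesis
  proof (rule LIMSEQ_le_const2[OF lim], intro exI allI impI)
    fix N :: nat
    have "norm (\<Sum>n<N. fY x n) \<le> s * sqrt (\<Sum>n<N. (norm (x n))\<^sup>2)"
      by (rule Q_sub[where N=N]) auto
    also have "\<dots> \<le> s * ell2_norm x"
      unfolding ell2_norm_def using s_nn sum_le_suminf[OF sa, of "{..<N}"]
      by (intro mult_left_mono real_sqrt_le_mono) auto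
    finally show "norm (\<Sum>n<N. fY x n) \<le> s * ell2_norm x" .
  qed
qed

lemma Y_add:
  assumes x: "x \<in> ell2_set" and y: "y \<in> ell2_set"
  shows "Yop (\<lambda>n. x n + y n) = Yop x + Yop y"
proof -
  have "fY (\<lambda>n. x n + y n) = (\<lambda>n. fY x n + fY y n)"
    by (rule ext) (simp add: fY_def Dn_add scaleR_add_right)
  then show ?thesis unfolding Yop_def
    using suminf_add[OF Y_summable[OF x] Y_summable[OF y]] by simp
qed

lemma Y_sc:
  assumes x: "x \<in> ell2_set"
  shows "Yop (\<lambda>n. scaleC c (x n)) = scaleC c (Yop x)"
proof -
  have "fY (\<lambda>n. scaleC c (x n)) = (\<lambda>n. scaleC c (fY x n))"
    by (rule ext) (simp add: fY_def Dn_sc scaleC_scaleR_comm)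
  then show ?thesis unfolding Yop_def
    using bounded_linear.suminf[OF bounded_linear_scaleC Y_summable[OF x], of c] by simp
qed

lemma wshift_ell2:
  assumes x: "x \<in> ell2_set"
  shows "wshift \<omega> x \<in> ell2_set"
proof -
  have sx: "summable (\<lambda>n. (norm (x n))\<^sup>2)" using x by (simp add: ell2_set_def)
  have "summable (\<lambda>n. (norm (wshift \<omega> x (Suc n)))\<^sup>2)"
  proof (rule summable_comparison_test'[OF summable_mult[OF sx, of "M\<^sup>2"], where N=0])
    fix n :: nat
    have "norm (wshift \<omega> x (Suc n)) = \<omega> n * norm (x n)"
      using pos[of n] by (simp add: wshift_def abs_of_pos)
    also have "\<dots> \<le> M * norm (x n)" using om_le[of n] by (intro mult_right_mono) auto
    finally have "(norm (wshift \<omega> x (Suc n)))\<^sup>2 \<le> (M * norm (x n))\<^sup>2" by (intro power_mono) auto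
    then show "norm ((norm (wshift \<omega> x (Suc n)))\<^sup>2) \<le> M\<^sup>2 * (norm (x n))\<^sup>2"
      by (simp add: power_mult_distrib)
  qed
  then have "summable (\<lambda>n. (norm (wshift \<omega> x n))\<^sup>2)"
    using summable_Suc_iff[of "\<lambda>n. (norm (wshift \<omega> x n))\<^sup>2"] by simp
  then show ?thesis unfolding ell2_set_def by simp
qed

lemma trunc_sum: "(\<Sum>m<N. X (en m (x m))) = X (\<lambda>k. if k < N then x k else 0)"
proof (induction N)
  case 0
  then show ?case using X_0 by simp
next
  case (Suc N)
  have e: "(\<lambda>k. if k < Suc N then x k else 0) = (\<lambda>k. (if k < N then x k else 0) + en N (x N) k)"
    by (auto simp: en_def)
  show ?case unfolding e using Suc X_add[OF trunc_ell2 en_ell2, of N x N "x N"] by simp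
qed

lemma X_lim:
  assumes x: "x \<in> ell2_set"
  shows "(\<lambda>m. X (en m (x m))) sums X x"
proof -
  define a where "a = (\<lambda>n. (norm (x n))\<^sup>2)"
  have sa: "summable a" using x by (simp add: a_def ell2_set_def)
  define t where "t N = (\<lambda>k. if k < N then x k else (0::'h))" for N
  have tl: "t N \<in> ell2_set" for N unfolding t_def by (rule trunc_ell2)
  have bnd: "norm (X x - X (t N)) \<le> \<bar>CX\<bar> * sqrt (suminf a - (\<Sum>i<N. a i))" for N
  proof -
    define r where "r = (\<lambda>k. if k < N then 0 else x k)"
    have d: "(\<lambda>k. x k - t N k) = r" by (auto simp: t_def r_def)
    have r2: "r \<in> ell2_set" using ell2_minus[OF x tl[of N]] d by simp
    have "X x - X (t N) = X r" using X_diff[OF x tl[of N]] d by simp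
    then have "norm (X x - X (t N)) \<le> CX * ell2_norm r" using X_bd[OF r2] by simp
    also have "\<dots> \<le> \<bar>CX\<bar> * ell2_norm r"
      by (intro mult_right_mono ell2_norm_nonneg r2) auto
    also have "ell2_norm r = sqrt (suminf a - (\<Sum>i<N. a i))"
    proof -
      have s1: "(\<lambda>k. if k \<in> {..<N} then a k else 0) sums (\<Sum>k\<in>{..<N}. a k)"
        by (rule sums_If_finite_set) simp
      have "(\<lambda>k. a k - (if k \<in> {..<N} then a k else 0)) sums (suminf a - (\<Sum>k\<in>{..<N}. a k))"
        by (rule sums_diff[OF summable_sums[OF sa] s1])
      moreover have "(\<lambda>k. a k - (if k \<in> {..<N} then a k else 0)) = (\<lambda>k. (norm (r k))\<^sup>2)"
        by (auto simp: r_def a_def)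
      ultimately have "(\<lambda>k. (norm (r k))\<^sup>2) sums (suminf a - (\<Sum>k<N. a k))" by simp
      then show ?thesis unfolding ell2_norm_def by (simp add: sums_iff)
    qed
    finally show ?thesis .
  qed
  have "(\<lambda>N. X x - X (t N)) \<longlonglongrightarrow> 0"
  proof (rule Lim_null_comparison)
    show "\<forall>\<^sub>F N in sequentially. norm (X x - X (t N)) \<le> \<bar>CX\<bar> * sqrt (suminf a - (\<Sum>i<N. a i))"
      using bnd by (intro always_eventually allI)
    show "(\<lambda>N. \<bar>CX\<bar> * sqrt (suminf a - (\<Sum>i<N. a i))) \<longlonglongrightarrow> 0"
      by (rule tendsto_mult_right_zero[OF tail_to_0[OF sa]])
  qed
  from tendsto_diff[OF tendsto_const this, of "X x"]
  have "(\<lambda>N. X (t N)) \<longlonglongrightarrow> X x" by simp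
  then show ?thesis unfolding sums_def t_def trunc_sum .
qed

lemma X_eq:
  assumes x: "x \<in> ell2_set"
  shows "X x = Yop (wshift \<omega> x) - T (Yop x)"
proof -
  interpret T: bounded_linear T by (rule T_lin)
  have sf: "summable (fY x)" by (rule Y_summable[OF x])
  have sg: "summable (fY (wshift \<omega> x))" by (rule Y_summable[OF wshift_ell2[OF x]])
  have g0: "fY (wshift \<omega> x) 0 = 0" by (simp add: fY_def wshift_def)
  have gS: "fY (wshift \<omega> x) (Suc m) = (1 / wbeta \<omega> m) *\<^sub>R Dn T X \<omega> (Suc m) (x m)" for m
  proof -
    have c: "1 / (wbeta \<omega> m * \<omega> m) * \<omega> m = 1 / wbeta \<omega> m"
      using wb_pos[of m] pos[of m] by (simp add: field_simps)
    show ?thesis using pos[of m] wb_pos[of m] by (simp del: Dn.simps add: fY_def wshift_def Dn_scaleR wbeta_Suc c)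
  qed
  have Y1: "Yop (wshift \<omega> x) = (\<Sum>m. fY (wshift \<omega> x) (Suc m))"
    unfolding Yop_def using suminf_split_head[OF sg] g0 by simp
  have Y2: "T (Yop x) = (\<Sum>m. T (fY x m))" unfolding Yop_def by (rule T.suminf[OF sf])
  have sT: "summable (\<lambda>m. T (fY x m))" by (rule T.summable[OF sf])
  have sg': "summable (\<lambda>m. fY (wshift \<omega> x) (Suc m))"
    using sg summable_Suc_iff[of "fY (wshift \<omega> x)"] by simp
  have diff: "fY (wshift \<omega> x) (Suc m) - T (fY x m) = X (en m (x m))" for m
  proof -
    have "fY (wshift \<omega> x) (Suc m) - T (fY x m)
        = (1 / wbeta \<omega> m) *\<^sub>R (Dn T X \<omega> (Suc m) (x m) - T (Dn T X \<omega> m (x m)))"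
      unfolding gS by (simp del: Dn.simps add: fY_def T_scaleR scaleR_diff_right)
    also have "\<dots> = (1 / wbeta \<omega> m) *\<^sub>R (wbeta \<omega> m *\<^sub>R X (en m (x m)))"
      by (simp only: Dn_Suc' add_diff_cancel_left')
    also have "\<dots> = X (en m (x m))" using wb_pos[of m] by simp
    finally show ?thesis .
  qed
  have "Yop (wshift \<omega> x) - T (Yop x) = (\<Sum>m. fY (wshift \<omega> x) (Suc m) - T (fY x m))"
    unfolding Y1 Y2 by (rule suminf_diff[OF sg' sT])
  also have "\<dots> = (\<Sum>m. X (en m (x m)))" by (simp only: diff)
  also have "\<dots> = X x" by (rule sums_unique[symmetric, OF X_lim[OF x]])
  finally show ?thesis by simp
qed

end


lemma sqrt_sum_le: "0 \<le> p \<Longrightarrow> 0 \<le> q \<Longrightarrow> sqrt (p\<^sup>2 + q\<^sup>2) \<le> p + (q::real)"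
  by (rule real_le_lsqrt) (auto simp: power2_sum)

lemma le_sqrt_sum1: "0 \<le> u \<Longrightarrow> u \<le> sqrt (u\<^sup>2 + (e::real)\<^sup>2)"
  by (rule real_le_rsqrt) simp

lemma le_sqrt_sum2: "0 \<le> e \<Longrightarrow> e \<le> sqrt (u\<^sup>2 + (e::real)\<^sup>2)"
  by (rule real_le_rsqrt) simp

context ctx
begin

definition bb :: "nat \<Rightarrow> real" where "bb n = (SUP m. wbeta \<omega> (n + m))"
definition cc :: "nat \<Rightarrow> real" where "cc n = bb n / wbeta \<omega> n"

lemma bb_bdd: "bdd_above (range (\<lambda>m. wbeta \<omega> (n + m)))"
  by (rule bdd_aboveI2[where M="M * wbeta \<omega> n"]) (rule wb_le)

lemma bb_ge: "wbeta \<omega> (n + m) \<le> bb n"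
  unfolding bb_def by (rule cSUP_upper[OF UNIV_I bb_bdd])

lemma bb_le: "bb n \<le> M * wbeta \<omega> n"
  unfolding bb_def by (rule cSUP_least) (auto intro: wb_le)

lemma bb_Suc: "bb (Suc n) \<le> bb n"
  unfolding bb_def[of "Suc n"]
proof (rule cSUP_least)
  show "UNIV \<noteq> {}" by simp
  fix m :: nat
  have "wbeta \<omega> (Suc n + m) = wbeta \<omega> (n + Suc m)" by simp
  then show "wbeta \<omega> (Suc n + m) \<le> bb n" using bb_ge[of n "Suc m"] by simp
qed

lemma bb_pos: "0 < bb n" using bb_ge[of n 0] wb_pos[of n] by simp

lemma cc_ge1: "1 \<le> cc n" using bb_ge[of n 0] wb_pos[of n] by (simp add: cc_def)

lemma cc_le: "cc n \<le> M" using bb_le[of n] wb_pos[of n] by (simp add: cc_def pos_divide_le_eq)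

lemma cc_pos: "0 < cc n" using cc_ge1[of n] by simp

definition Dm :: "(nat \<Rightarrow> 'h) \<Rightarrow> nat \<Rightarrow> 'h" where "Dm x = (\<lambda>n. cc n *\<^sub>R x n)"
definition Di :: "(nat \<Rightarrow> 'h) \<Rightarrow> nat \<Rightarrow> 'h" where "Di x = (\<lambda>n. (1 / cc n) *\<^sub>R x n)"

lemma Dm_norm: "norm (Dm x n) \<le> M * norm (x n)"
  using cc_le[of n] cc_pos[of n] by (simp add: Dm_def mult_right_mono)

lemma Di_norm: "norm (Di x n) \<le> 1 * norm (x n)"
proof -
  have c: "0 < cc n" "1 \<le> cc n" using cc_pos[of n] cc_ge1[of n] by auto
  have "norm (x n) * 1 \<le> norm (x n) * cc n" using c by (intro mult_left_mono) auto
  then have "norm (x n) / cc n \<le> norm (x n)" using c by (simp add: pos_divide_le_eq)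
  then show ?thesis using c by (simp add: Di_def abs_of_pos)
qed

lemma Dm_ell2: assumes "x \<in> ell2_set" shows "Dm x \<in> ell2_set"
  using ell2_bound(1)[where x=x and y="Dm x" and K=M, OF assms Dm_norm] .
lemma Dm_ell2_norm: assumes "x \<in> ell2_set" shows "ell2_norm (Dm x) \<le> M * ell2_norm x"
  using ell2_bound(2)[where x=x and y="Dm x" and K=M, OF assms Dm_norm] M_ge1 by simp
lemma Di_ell2: assumes "x \<in> ell2_set" shows "Di x \<in> ell2_set"
  using ell2_bound(1)[where x=x and y="Di x" and K=1, OF assms Di_norm] .
lemma Di_ell2_norm: assumes "x \<in> ell2_set" shows "ell2_norm (Di x) \<le> ell2_norm x"
  using ell2_bound(2)[where x=x and y="Di x" and K=1, OF assms Di_norm] by simp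

lemma cc_nz: "cc n \<noteq> 0" using cc_pos[of n] by simp
lemma Dm_Di[simp]: "Dm (Di x) = x"
  by (rule ext) (simp add: Dm_def Di_def cc_nz)
lemma Di_Dm[simp]: "Di (Dm x) = x"
  by (rule ext) (simp add: Dm_def Di_def cc_nz)

lemma Dm_add: "Dm (\<lambda>n. x n + y n) = (\<lambda>n. Dm x n + Dm y n)"
  by (simp add: Dm_def scaleR_add_right)
lemma Dm_sc: "Dm (\<lambda>n. scaleC c (x n)) = (\<lambda>n. scaleC c (Dm x n))"
  by (simp add: Dm_def scaleC_scaleR_comm)

lemma shift_contr:
  assumes x: "x \<in> ell2_set"
  shows "ell2_norm (Dm (wshift \<omega> (Di x))) \<le> ell2_norm x"
proof -
  define y where "y = Dm (wshift \<omega> (Di x))"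
  have y: "y \<in> ell2_set" unfolding y_def by (intro Dm_ell2 wshift_ell2 Di_ell2 x)
  have y0: "y 0 = 0" by (simp add: y_def Dm_def wshift_def)
  have yS: "norm (y (Suc n)) \<le> norm (x n)" for n
  proof -
    have e1: "y (Suc n) = (cc (Suc n) * \<omega> n * (1 / cc n)) *\<^sub>R x n"
      by (simp add: y_def Dm_def Di_def wshift_def)
    have e2: "cc (Suc n) * \<omega> n * (1 / cc n) = bb (Suc n) / bb n"
      using wb_pos[of n] pos[of n] bb_pos[of n] by (simp add: cc_def wbeta_Suc field_simps)
    define r where "r = bb (Suc n) / bb n"
    have r1: "r \<le> 1" using bb_Suc[of n] bb_pos[of n] by (simp add: r_def)
    have r0: "0 \<le> r" using bb_pos[of n] bb_pos[of "Suc n"] by (simp add: r_def)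
    have "norm (y (Suc n)) = \<bar>r\<bar> * norm (x n)" unfolding e1 e2 r_def[symmetric] by (rule norm_scaleR)
    also have "\<dots> = r * norm (x n)" using r0 by simp
    also have "\<dots> \<le> norm (x n)" by (rule mult_left_le_one_le[OF norm_ge_zero r0 r1])
    finally show ?thesis .
  qed
  have sy: "summable (\<lambda>n. (norm (y n))\<^sup>2)" using y by (simp add: ell2_set_def)
  have sx: "summable (\<lambda>n. (norm (x n))\<^sup>2)" using x by (simp add: ell2_set_def)
  have sy': "summable (\<lambda>n. (norm (y (Suc n)))\<^sup>2)"
    using sy summable_Suc_iff[of "\<lambda>n. (norm (y n))\<^sup>2"] by simp
  have "(\<Sum>n. (norm (y n))\<^sup>2) = (\<Sum>n. (norm (y (Suc n)))\<^sup>2)"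
    using suminf_split_head[OF sy] y0 by simp
  also have "\<dots> \<le> (\<Sum>n. (norm (x n))\<^sup>2)"
  proof (rule suminf_le[OF _ sy' sx])
    fix n show "(norm (y (Suc n)))\<^sup>2 \<le> (norm (x n))\<^sup>2" using yS[of n] by (simp add: power_mono)
  qed
  finally show ?thesis unfolding ell2_norm_def y_def by (rule real_sqrt_le_mono)
qed

lemma main:
  fixes Lk Lki :: "'k \<Rightarrow> 'k"
  assumes Lk: "bop hspace hspace Lk" and Lki: "bop hspace hspace Lki"
    and inv: "\<And>v. Lki (Lk v) = v" "\<And>v. Lk (Lki v) = v"
    and contr: "\<And>v. norm (Lk (T (Lki v))) \<le> norm v"
  shows "similar_to_contraction dsum_space (Rop T X \<omega>)"
proof -
  note Lkl = bop_hspace[OF Lk] and Lkil = bop_hspace[OF Lki]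
  obtain KL where KL: "KL > 0" "\<And>v. norm (Lk v) \<le> norm v * KL"
    using bounded_linear.pos_bounded[OF Lkl(1)] by blast
  obtain KI where KI: "KI > 0" "\<And>v. norm (Lki v) \<le> norm v * KI"
    using bounded_linear.pos_bounded[OF Lkil(1)] by blast
  define L where "L = (\<lambda>(a, x). (Lk (a - Yop x), Dm x))"
  define Li where "Li = (\<lambda>(a, x). (Lki a + Yop (Di x), Di x))"
  have Lp: "L (a, x) = (Lk (a - Yop x), Dm x)" for a x by (simp add: L_def)
  have Lip: "Li (a, x) = (Lki a + Yop (Di x), Di x)" for a x by (simp add: Li_def)
  have nrm: "sp_norm dsum_space (a, x) = sqrt ((norm a)\<^sup>2 + (ell2_norm x)\<^sup>2)" for a x
    by (simp add: dsum_space_def)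
  have car: "sp_carrier dsum_space = UNIV \<times> ell2_set" by (simp add: dsum_space_def)
  have add: "sp_add dsum_space (a, x) (b, y) = (a + b, \<lambda>n. x n + y n)" for a b x y
    by (simp add: dsum_space_def)
  have scl: "sp_scale dsum_space c (a, x) = (scaleC c a, \<lambda>n. scaleC c (x n))" for c a x
    by (simp add: dsum_space_def)
  have Lkd: "Lk (u - v) = Lk u - Lk v" for u v using Lkl(3)[of "u - v" v] by simp
  have bopL: "bop dsum_space dsum_space L"
    unfolding bop_def car
  proof (intro conjI ballI allI)
    fix v :: "'k \<times> (nat \<Rightarrow> 'h)" assume "v \<in> UNIV \<times> ell2_set"
    then obtain a x where v: "v = (a, x)" and x: "x \<in> ell2_set" by auto
    show "L v \<in> UNIV \<times> ell2_set" unfolding v Lp using Dm_ell2[OF x] by simp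
    fix w :: "'k \<times> (nat \<Rightarrow> 'h)" assume "w \<in> UNIV \<times> ell2_set"
    then obtain b y where w: "w = (b, y)" and y: "y \<in> ell2_set" by auto
    have e: "a + b - Yop (\<lambda>n. x n + y n) = (a - Yop x) + (b - Yop y)"
      unfolding Y_add[OF x y] by (simp add: algebra_simps)
    have "Lk (a + b - Yop (\<lambda>n. x n + y n)) = Lk (a - Yop x) + Lk (b - Yop y)"
      unfolding e by (rule Lkl(3))
    then show "L (sp_add dsum_space v w) = sp_add dsum_space (L v) (L w)"
      unfolding v w add Lp by (simp only: Dm_add prod.inject)
  next
    fix c and v :: "'k \<times> (nat \<Rightarrow> 'h)" assume "v \<in> UNIV \<times> ell2_set"
    then obtain a x where v: "v = (a, x)" and x: "x \<in> ell2_set" by auto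
    have "scaleC c a - Yop (\<lambda>n. scaleC c (x n)) = scaleC c (a - Yop x)"
      using Y_sc[OF x] by (simp add: scaleC_diff_right)
    then show "L (sp_scale dsum_space c v) = sp_scale dsum_space c (L v)"
      unfolding v scl Lp by (simp add: Lkl(2) Dm_sc)
  next
    show "\<exists>C. \<forall>v\<in>UNIV \<times> ell2_set. sp_norm dsum_space (L v) \<le> C * sp_norm dsum_space v"
    proof (intro exI ballI)
      fix v :: "'k \<times> (nat \<Rightarrow> 'h)" assume "v \<in> UNIV \<times> ell2_set"
      then obtain a x where v: "v = (a, x)" and x: "x \<in> ell2_set" by auto
      define N where "N = sqrt ((norm a)\<^sup>2 + (ell2_norm x)\<^sup>2)"
      have e0: "0 \<le> ell2_norm x" by (rule ell2_norm_nonneg[OF x])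
      have aN: "norm a \<le> N" unfolding N_def by (rule le_sqrt_sum1) simp
      have xN: "ell2_norm x \<le> N" unfolding N_def by (rule le_sqrt_sum2[OF e0])
      have dm0: "0 \<le> ell2_norm (Dm x)" by (rule ell2_norm_nonneg[OF Dm_ell2[OF x]])
      have "sp_norm dsum_space (L v) = sqrt ((norm (Lk (a - Yop x)))\<^sup>2 + (ell2_norm (Dm x))\<^sup>2)"
        unfolding v Lp nrm ..
      also have "\<dots> \<le> norm (Lk (a - Yop x)) + ell2_norm (Dm x)"
        by (rule sqrt_sum_le) (simp_all add: dm0)
      also have "\<dots> \<le> (norm a + s * ell2_norm x) * KL + M * ell2_norm x"
      proof (rule add_mono)
        have "norm (Lk (a - Yop x)) \<le> norm (a - Yop x) * KL" by (rule KL(2))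
        also have "\<dots> \<le> (norm a + s * ell2_norm x) * KL"
        proof (rule mult_right_mono)
          show "norm (a - Yop x) \<le> norm a + s * ell2_norm x"
            using norm_triangle_ineq4[of a "Yop x"] Y_bound[OF x] by linarith
        qed (use KL in simp)
        finally show "norm (Lk (a - Yop x)) \<le> (norm a + s * ell2_norm x) * KL" .
        show "ell2_norm (Dm x) \<le> M * ell2_norm x" by (rule Dm_ell2_norm[OF x])
      qed
      also have "\<dots> \<le> (N + s * N) * KL + M * N"
        using aN xN s_nn KL(1) M_ge1
        by (intro add_mono mult_right_mono mult_left_mono) auto
      also have "\<dots> = ((1 + s) * KL + M) * sp_norm dsum_space v"
        unfolding v nrm N_def by (simp add: algebra_simps)
      finally show "sp_norm dsum_space (L v) \<le> ((1 + s) * KL + M) * sp_norm dsum_space v" .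
    qed
  qed
  have bopLi: "bop dsum_space dsum_space Li"
    unfolding bop_def car
  proof (intro conjI ballI allI)
    fix v :: "'k \<times> (nat \<Rightarrow> 'h)" assume "v \<in> UNIV \<times> ell2_set"
    then obtain a x where v: "v = (a, x)" and x: "x \<in> ell2_set" by auto
    show "Li v \<in> UNIV \<times> ell2_set" unfolding v Lip using Di_ell2[OF x] by simp
    fix w :: "'k \<times> (nat \<Rightarrow> 'h)" assume "w \<in> UNIV \<times> ell2_set"
    then obtain b y where w: "w = (b, y)" and y: "y \<in> ell2_set" by auto
    have dadd: "Di (\<lambda>n. x n + y n) = (\<lambda>n. Di x n + Di y n)" by (simp add: Di_def scaleR_add_right)
    have "Lki (a + b) + Yop (Di (\<lambda>n. x n + y n)) = (Lki a + Yop (Di x)) + (Lki b + Yop (Di y))"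
      unfolding dadd using Y_add[OF Di_ell2[OF x] Di_ell2[OF y]] Lkil(3)[of a b]
      by (simp add: Di_def algebra_simps)
    then show "Li (sp_add dsum_space v w) = sp_add dsum_space (Li v) (Li w)"
      unfolding v w add Lip by (simp add: dadd)
  next
    fix c and v :: "'k \<times> (nat \<Rightarrow> 'h)" assume "v \<in> UNIV \<times> ell2_set"
    then obtain a x where v: "v = (a, x)" and x: "x \<in> ell2_set" by auto
    have dsc: "Di (\<lambda>n. scaleC c (x n)) = (\<lambda>n. scaleC c (Di x n))" by (simp add: Di_def scaleC_scaleR_comm)
    have "Lki (scaleC c a) + Yop (Di (\<lambda>n. scaleC c (x n))) = scaleC c (Lki a + Yop (Di x))"
      unfolding dsc using Y_sc[OF Di_ell2[OF x], of c] Lkil(2)[of c a]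
      by (simp add: Di_def scaleC_add_right)
    then show "Li (sp_scale dsum_space c v) = sp_scale dsum_space c (Li v)"
      unfolding v scl Lip by (simp add: dsc)
  next
    show "\<exists>C. \<forall>v\<in>UNIV \<times> ell2_set. sp_norm dsum_space (Li v) \<le> C * sp_norm dsum_space v"
    proof (intro exI ballI)
      fix v :: "'k \<times> (nat \<Rightarrow> 'h)" assume "v \<in> UNIV \<times> ell2_set"
      then obtain a x where v: "v = (a, x)" and x: "x \<in> ell2_set" by auto
      define N where "N = sqrt ((norm a)\<^sup>2 + (ell2_norm x)\<^sup>2)"
      have e0: "0 \<le> ell2_norm x" by (rule ell2_norm_nonneg[OF x])
      have aN: "norm a \<le> N" unfolding N_def by (rule le_sqrt_sum1) simp
      have xN: "ell2_norm x \<le> N" unfolding N_def by (rule le_sqrt_sum2[OF e0])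
      have di0: "0 \<le> ell2_norm (Di x)" by (rule ell2_norm_nonneg[OF Di_ell2[OF x]])
      have dix: "ell2_norm (Di x) \<le> ell2_norm x" by (rule Di_ell2_norm[OF x])
      have "sp_norm dsum_space (Li v) = sqrt ((norm (Lki a + Yop (Di x)))\<^sup>2 + (ell2_norm (Di x))\<^sup>2)"
        unfolding v Lip nrm ..
      also have "\<dots> \<le> norm (Lki a + Yop (Di x)) + ell2_norm (Di x)"
        by (rule sqrt_sum_le) (simp_all add: di0)
      also have "\<dots> \<le> (norm a * KI + s * ell2_norm x) + ell2_norm x"
      proof (rule add_mono)
        have "norm (Lki a + Yop (Di x)) \<le> norm (Lki a) + norm (Yop (Di x))" by (rule norm_triangle_ineq)
        also have "\<dots> \<le> norm a * KI + s * ell2_norm x"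
        proof (rule add_mono)
          show "norm (Lki a) \<le> norm a * KI" by (rule KI(2))
          have "norm (Yop (Di x)) \<le> s * ell2_norm (Di x)" by (rule Y_bound[OF Di_ell2[OF x]])
          also have "\<dots> \<le> s * ell2_norm x" using dix s_nn by (rule mult_left_mono)
          finally show "norm (Yop (Di x)) \<le> s * ell2_norm x" .
        qed
        finally show "norm (Lki a + Yop (Di x)) \<le> norm a * KI + s * ell2_norm x" .
        show "ell2_norm (Di x) \<le> ell2_norm x" by (rule dix)
      qed
      also have "\<dots> \<le> (N * KI + s * N) + N"
        using aN xN s_nn KI(1)
        by (intro add_mono mult_right_mono mult_left_mono) auto
      also have "\<dots> = (KI + s + 1) * sp_norm dsum_space v"
        unfolding v nrm N_def by (simp add: algebra_simps)
      finally show "sp_norm dsum_space (Li v) \<le> (KI + s + 1) * sp_norm dsum_space v" .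
    qed
  qed
  show ?thesis unfolding similar_to_contraction_def
  proof (intro exI conjI ballI)
    show "bop dsum_space dsum_space L" by (rule bopL)
    show "bop dsum_space dsum_space Li" by (rule bopLi)
  next
    fix v :: "'k \<times> (nat \<Rightarrow> 'h)" assume "v \<in> sp_carrier dsum_space"
    then obtain a x where v: "v = (a, x)" and x: "x \<in> ell2_set" by (auto simp: car)
    show "Li (L v) = v" unfolding v Lp Lip using inv(1) by simp
    show "L (Li v) = v" unfolding v Lp Lip using inv(2) by simp
  next
    fix v :: "'k \<times> (nat \<Rightarrow> 'h)" assume "v \<in> sp_carrier dsum_space"
    then obtain a x where v: "v = (a, x)" and x: "x \<in> ell2_set" by (auto simp: car)
    define x' where "x' = Di x"
    have x': "x' \<in> ell2_set" unfolding x'_def by (rule Di_ell2[OF x])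
    have XE: "X x' = Yop (wshift \<omega> x') - T (Yop x')" by (rule X_eq[OF x'])
    have "Rop T X \<omega> (Li v) = (T (Lki a + Yop x') + X x', wshift \<omega> x')"
      unfolding v Lip x'_def by (simp add: Rop_def)
    also have "\<dots> = (T (Lki a) + Yop (wshift \<omega> x'), wshift \<omega> x')"
      unfolding XE T_add by simp
    finally have "L (Rop T X \<omega> (Li v)) = (Lk (T (Lki a)), Dm (wshift \<omega> (Di x)))"
      unfolding x'_def by (simp add: Lp)
    then have "sp_norm dsum_space (L (Rop T X \<omega> (Li v)))
        = sqrt ((norm (Lk (T (Lki a))))\<^sup>2 + (ell2_norm (Dm (wshift \<omega> (Di x))))\<^sup>2)"
      by (simp add: nrm)
    also have "\<dots> \<le> sqrt ((norm a)\<^sup>2 + (ell2_norm x)\<^sup>2)"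
    proof (intro real_sqrt_le_mono add_mono power_mono)
      show "norm (Lk (T (Lki a))) \<le> norm a" by (rule contr)
      show "ell2_norm (Dm (wshift \<omega> (Di x))) \<le> ell2_norm x" by (rule shift_contr[OF x])
      show "0 \<le> ell2_norm (Dm (wshift \<omega> (Di x)))"
        by (intro ell2_norm_nonneg Dm_ell2 wshift_ell2 Di_ell2 x)
    qed simp
    also have "\<dots> = sp_norm dsum_space v" unfolding v nrm ..
    finally show "sp_norm dsum_space (L (Rop T X \<omega> (Li v))) \<le> sp_norm dsum_space v" .
  qed
qed

end


lemma Dn_X0: "T 0 = 0 \<Longrightarrow> Dn T (\<lambda>_. 0) \<omega> n h = 0"
  by (induction n) simp_all

lemma scaleC_inv_real: "scaleC (1 / complex_of_real r) x = (1 / r) *\<^sub>R (x::'a::complex_hilbert)"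
  using scaleC_of_real[of "1 / r" x] by simp

lemma near_simp:
  fixes T :: "'k::complex_hilbert \<Rightarrow> 'k" and X :: "(nat \<Rightarrow> 'h::complex_hilbert) \<Rightarrow> 'k"
  assumes T0: "T 0 = 0"
  shows "sp_norm dsum_space
          (dsum_sum {..N} (\<lambda>n. sp_scale dsum_space (complex_of_real (1 / wbeta \<omega> n))
              (sp_add dsum_space ((Rop T X \<omega> ^^ n) (emb0 (xs n)))
                  (sp_scale dsum_space (-1) ((Rop T (\<lambda>_. 0) \<omega> ^^ n) (emb0 (xs n)))))))
       = norm (\<Sum>n\<le>N. (1 / wbeta \<omega> n) *\<^sub>R Dn T X \<omega> n (xs n))"
  unfolding R_pow Dn_X0[where T=T, OF T0]
  by (simp add: dsum_space_def dsum_sum_def scaleC_minus1 scaleC_of_real scaleC_inv_real)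

theorem theorem4p7:
  fixes \<omega> :: "nat \<Rightarrow> real"
    and T :: "'k::complex_hilbert \<Rightarrow> 'k"
    and X :: "(nat \<Rightarrow> 'h::complex_hilbert) \<Rightarrow> 'k"
  assumes pos: "\<And>k. \<omega> k > 0"
    and sup_bdd: "\<exists>M. \<forall>n k. wbeta \<omega> (n + k) / wbeta \<omega> n \<le> M"
    and T_bop: "bop hspace hspace T"
    and T_sim: "similar_to_contraction hspace T"
    and X_bop: "bop ell2 hspace X"
    and near: "beta_quad_near_mod_H (wbeta \<omega>) (Rop T X \<omega>) (Rop T (\<lambda>_. 0) \<omega>)"
  shows "similar_to_contraction dsum_space (Rop T X \<omega>)"
proof -
  have T0: "T 0 = 0" using bop_hspace(3)[OF T_bop, of 0 0] by simp
  obtain M where M: "\<And>n k. wbeta \<omega> (n + k) / wbeta \<omega> n \<le> M" using sup_bdd by blast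
  have Xa: "\<And>x y. x \<in> ell2_set \<Longrightarrow> y \<in> ell2_set \<Longrightarrow> X (\<lambda>n. x n + y n) = X x + X y"
    and Xs: "\<And>x c. x \<in> ell2_set \<Longrightarrow> X (\<lambda>n. scaleC c (x n)) = scaleC c (X x)"
    and Xb: "\<exists>C. \<forall>x\<in>ell2_set. norm (X x) \<le> C * ell2_norm x"
    using X_bop by (auto simp: bop_def ell2_def hspace_def)
  obtain CX where CX: "\<And>x. x \<in> ell2_set \<Longrightarrow> norm (X x) \<le> CX * ell2_norm x" using Xb by blast
  obtain s where s: "\<And>N xs. sp_norm dsum_space
          (dsum_sum {..N} (\<lambda>n. sp_scale dsum_space (complex_of_real (1 / wbeta \<omega> n))
              (sp_add dsum_space ((Rop T X \<omega> ^^ n) (emb0 (xs n)))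
                  (sp_scale dsum_space (-1) ((Rop T (\<lambda>_. 0) \<omega> ^^ n) (emb0 (xs n)))))))
        \<le> s * sqrt (\<Sum>n\<le>N. (norm (xs n))\<^sup>2)"
    using near unfolding beta_quad_near_mod_H_def by blast
  have Q: "norm (\<Sum>n\<le>N. (1 / wbeta \<omega> n) *\<^sub>R Dn T X \<omega> n (xs n)) \<le> \<bar>s\<bar> * sqrt (\<Sum>n\<le>N. (norm (xs n))\<^sup>2)"
    for N and xs :: "nat \<Rightarrow> 'h"
  proof -
    have "norm (\<Sum>n\<le>N. (1 / wbeta \<omega> n) *\<^sub>R Dn T X \<omega> n (xs n)) \<le> s * sqrt (\<Sum>n\<le>N. (norm (xs n))\<^sup>2)"
      using s[of N xs] unfolding near_simp[where T=T and X=X and \<omega>=\<omega>, OF T0] .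
    also have "\<dots> \<le> \<bar>s\<bar> * sqrt (\<Sum>n\<le>N. (norm (xs n))\<^sup>2)"
      by (intro mult_right_mono) (auto intro: sum_nonneg)
    finally show ?thesis .
  qed
  interpret ctx T X \<omega> M "\<bar>s\<bar>" CX
    by unfold_locales (use pos M T_bop Xa Xs CX Q in auto)
  have hc: "sp_carrier hspace = UNIV" "sp_norm hspace = norm" by (simp_all add: hspace_def)
  obtain Lk Lki where L: "bop hspace hspace Lk" "bop hspace hspace Lki"
    and h1: "\<forall>v\<in>sp_carrier hspace. Lki (Lk v) = v \<and> Lk (Lki v) = v"
    and h2: "\<forall>v\<in>sp_carrier hspace. sp_norm hspace (Lk (T (Lki v))) \<le> sp_norm hspace v"
    using T_sim unfolding similar_to_contraction_def by blast
  have inv: "\<And>v. Lki (Lk v) = v" "\<And>v. Lk (Lki v) = v" using h1 unfolding hc by auto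
  have contr: "\<And>v. norm (Lk (T (Lki v))) \<le> norm v" using h2 unfolding hc by auto
  show ?thesis by (rule main[OF L inv contr])
qed

end
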